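(* Let $\mathcal{A}=(A,B,s,t,\Delta)$ be a left multiplier bialgebroid with associated maps $\widetilde{T_\lambda},\widetilde{T_\rho}$. Regard $t$ as a homomorphism and $s$ as an anti-homomorphism from $B^{\mathrm{op}}$ to $M(A)$, let $\varsigma$ be the algebra isomorphism from the left target algebra $A\bar\times_BA$ of $\mathcal{A}$ onto the left target algebra $A\bar\times_{B^{\mathrm{op}}}A$ for $(A,B^{\mathrm{op}},t,s)$ induced by the flip $\Sigma\colon{}_BA\otimes A^B\to{}_{B^{\mathrm{op}}}A\otimes A^{B^{\mathrm{op}}}$, $a\otimes b\mapsto b\otimes a$ (i.e. $\varsigma(T)=\Sigma T\Sigma^{-1}$), and let $\Delta^{\mathrm{co}}=\varsigma\circ\Delta$. Then $\mathcal{A}^{\mathrm{co}}=(A,B^{\mathrm{op}},t,s,\Delta^{\mathrm{co}})$ is a left multiplier bialgebroid, and its associated maps are $\widetilde{T_\lambda}^{\mathrm{co}}=\Sigma\circ\widetilde{T_\rho}\circ\Sigma_{(A,A)}$ and $\widetilde{T_\rho}^{\mathrm{co}}=\Sigma\circ\widetilde{T_\lambda}\circ\Sigma_{(A,A)}$, where $\Sigma_{(A,A)}$ is the flip on $A\otimes A$.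
   Context: All algebras are associative complex algebras, not necessarily unital. For an algebra $A$ with $A_A$ non-degenerate (if $ab=0$ for all $b$ then $a=0$), $L(A)$ denotes the right $A$-module endomorphisms of $A$ (containing $A$ via left multiplication) and $M(A)=\{T\in L(A):aT\in A\ \forall a\}$. A left multiplier bialgebroid is a tuple $(A,B,s,t,\Delta)$ where: (i) $A,B$ are algebras, $A_A$ is non-degenerate and idempotent ($AA=A$); (ii) $s\colon B\to M(A)$ is a homomorphism and $t\colon B\to M(A)$ an anti-homomorphism with $s(x)t(y)=t(y)s(x)$, $s,t$ injective, $s(B)A=A=t(B)A$; ${}_BA\otimes A^B$, the quotient of $A\otimes A$ by the span of $s(x)a\otimes b-a\otimes t(x)b$, is non-degenerate as a right module over $A\otimes1$ and over $1\otimes A$; (iii) $\Delta$ is an algebra homomorphism into the algebra $A\bar\times_BA$ of linear endomorphisms $T$ of ${}_BA\otimes A^B$ such that for all $a,b\in A$ there are $T(a\otimes1),T(1\otimes b)\in{}_BA\otimes A^B$ with $T(a\otimes b)=T(a\otimes1)(1\otimes b)=T(1\otimes b)(a\otimes1)$; (iv) $\Delta(s(x)t(y)as(x')t(y'))=(t(y)\otimes s(x))\Delta(a)(t(y')\otimes s(x'))$ for $a\in A$, $x,y,x',y'\in B$; (v) for all $a,b,c\in A$: if $\Delta(b)(1\otimes c)=\sum_ip_i\otimes q_i$ and $\Delta(b)(a\otimes1)=\sum_ju_j\otimes v_j$, then $\sum_i\Delta(p_i)(a\otimes1)\otimes q_i=\sum_ju_j\otimes\Delta(v_j)(1\otimes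 c)$ in the quotient of $A^{\otimes3}$ by the span of $s(x)a\otimes b\otimes c-a\otimes t(x)b\otimes c$ and $a\otimes s(x)b\otimes c-a\otimes b\otimes t(x)c$. Its associated maps are $\widetilde{T_\lambda},\widetilde{T_\rho}\colon A\otimes A\to{}_BA\otimes A^B$, $\widetilde{T_\lambda}(a\otimes b)=\Delta(b)(a\otimes1)$, $\widetilde{T_\rho}(a\otimes b)=\Delta(a)(1\otimes b)$. *)

theory Defs
  imports Complex_Main
begin

class scaleC =
  fixes scaleC :: "complex \<Rightarrow> 'a \<Rightarrow> 'a"  (infixr \<open>*\<^sub>C\<close> 75)

class complex_vector = scaleC + ab_group_add +
  assumes scaleC_add_right: "a *\<^sub>C (x + y) = a *\<^sub>C x + a *\<^sub>C y"
    and scaleC_add_left: "(a + b) *\<^sub>C x = a *\<^sub>C x + b *\<^sub>C x"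
    and scaleC_scaleC: "a *\<^sub>C b *\<^sub>C x = (a * b) *\<^sub>C x"
    and scaleC_one: "1 *\<^sub>C x = x"

class complex_algebra = complex_vector + ring +
  assumes mult_scaleC_left: "a *\<^sub>C x * y = a *\<^sub>C (x * y)"
    and mult_scaleC_right: "x * a *\<^sub>C y = a *\<^sub>C (x * y)"

text \<open>An element of a (quotient of a) tensor power of A is represented by a finite
list of simple tensors; its image in the free complex vector space on the
underlying tuples is \<open>fv\<close>.\<close>

definition delta :: "'x \<Rightarrow> 'x \<Rightarrow> complex" where
  "delta p = (\<lambda>q. if q = p then 1 else 0)"

definition fv :: "'x list \<Rightarrow> 'x \<Rightarrow> complex" where
  "fv l = (\<lambda>q. of_nat (count_list l q))"

inductive_set cspan :: "('x \<Rightarrow> complex) set \<Rightarrow> ('x \<Rightarrow> complex) set" for G where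
  cspan_zero: "(\<lambda>_. 0) \<in> cspan G"
| cspan_step: "g \<in> G \<Longrightarrow> f \<in> cspan G \<Longrightarrow> (\<lambda>q. c * g q + f q) \<in> cspan G"

definition tens2 :: "('a::complex_vector \<times> 'a \<Rightarrow> complex) set" where
  "tens2 =
     {(\<lambda>q. delta (a + a', b) q - delta (a, b) q - delta (a', b) q) | a a' b. True}
   \<union> {(\<lambda>q. delta (a, b + b') q - delta (a, b) q - delta (a, b') q) | a b b'. True}
   \<union> {(\<lambda>q. delta (c *\<^sub>C a, b) q - c * delta (a, b) q) | c a b. True}
   \<union> {(\<lambda>q. delta (a, c *\<^sub>C b) q - c * delta (a, b) q) | c a b. True}"

definition bal2 :: "('b \<Rightarrow> 'a \<Rightarrow> 'a) \<Rightarrow> ('b \<Rightarrow> 'a \<Rightarrow> 'a) \<Rightarrow> ('a \<times> 'a \<Rightarrow> complex) set" where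
  "bal2 s t = {(\<lambda>q. delta (s x a, b) q - delta (a, t x b) q) | x a b. True}"

text \<open>Equality in the balanced tensor product  _B A \<otimes> A^B.\<close>
definition eqQ :: "('b \<Rightarrow> 'a::complex_vector \<Rightarrow> 'a) \<Rightarrow> ('b \<Rightarrow> 'a \<Rightarrow> 'a) \<Rightarrow>
    ('a \<times> 'a) list \<Rightarrow> ('a \<times> 'a) list \<Rightarrow> bool" where
  "eqQ s t l l' \<longleftrightarrow> (\<lambda>q. fv l q - fv l' q) \<in> cspan (tens2 \<union> bal2 s t)"

definition tens3 :: "('a::complex_vector \<times> 'a \<times> 'a \<Rightarrow> complex) set" where
  "tens3 =
     {(\<lambda>q. delta (a + a', b, d) q - delta (a, b, d) q - delta (a', b, d) q) | a a' b d. True}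
   \<union> {(\<lambda>q. delta (a, b + b', d) q - delta (a, b, d) q - delta (a, b', d) q) | a b b' d. True}
   \<union> {(\<lambda>q. delta (a, b, d + d') q - delta (a, b, d) q - delta (a, b, d') q) | a b d d'. True}
   \<union> {(\<lambda>q. delta (c *\<^sub>C a, b, d) q - c * delta (a, b, d) q) | c a b d. True}
   \<union> {(\<lambda>q. delta (a, c *\<^sub>C b, d) q - c * delta (a, b, d) q) | c a b d. True}
   \<union> {(\<lambda>q. delta (a, b, c *\<^sub>C d) q - c * delta (a, b, d) q) | c a b d. True}"

definition bal3 :: "('b \<Rightarrow> 'a \<Rightarrow> 'a) \<Rightarrow> ('b \<Rightarrow> 'a \<Rightarrow> 'a) \<Rightarrow> ('a \<times> 'a \<times> 'a \<Rightarrow> complex) set" where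
  "bal3 s t =
     {(\<lambda>q. delta (s x a, b, d) q - delta (a, t x b, d) q) | x a b d. True}
   \<union> {(\<lambda>q. delta (a, s x b, d) q - delta (a, b, t x d) q) | x a b d. True}"

definition eq3 :: "('b \<Rightarrow> 'a::complex_vector \<Rightarrow> 'a) \<Rightarrow> ('b \<Rightarrow> 'a \<Rightarrow> 'a) \<Rightarrow>
    ('a \<times> 'a \<times> 'a) list \<Rightarrow> ('a \<times> 'a \<times> 'a) list \<Rightarrow> bool" where
  "eq3 s t l l' \<longleftrightarrow> (\<lambda>q. fv l q - fv l' q) \<in> cspan (tens3 \<union> bal3 s t)"

text \<open>X(a \<otimes> 1), X(1 \<otimes> b), complex scalar multiple, and (f \<otimes> g)X.\<close>
definition rmul1 :: "('a::times \<times> 'a) list \<Rightarrow> 'a \<Rightarrow> ('a \<times> 'a) list" where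
  "rmul1 X a = map (\<lambda>(p, q). (p * a, q)) X"

definition rmul2 :: "('a::times \<times> 'a) list \<Rightarrow> 'a \<Rightarrow> ('a \<times> 'a) list" where
  "rmul2 X b = map (\<lambda>(p, q). (p, q * b)) X"

definition scal :: "complex \<Rightarrow> ('a::complex_vector \<times> 'a) list \<Rightarrow> ('a \<times> 'a) list" where
  "scal c X = map (\<lambda>(p, q). (c *\<^sub>C p, q)) X"

definition lmul2 :: "('a \<Rightarrow> 'a) \<Rightarrow> ('a \<Rightarrow> 'a) \<Rightarrow> ('a \<times> 'a) list \<Rightarrow> ('a \<times> 'a) list" where
  "lmul2 f g X = map (\<lambda>(p, q). (f p, g q)) X"

text \<open>A complex algebra structure (associative, bilinear) given by an explicit product;
used for B so that the opposite algebra B^op is \<open>\<lambda>x y. mB y x\<close>.\<close>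
definition cplx_alg :: "('b::complex_vector \<Rightarrow> 'b \<Rightarrow> 'b) \<Rightarrow> bool" where
  "cplx_alg m \<longleftrightarrow>
     (\<forall>x y z. m (m x y) z = m x (m y z)) \<and>
     (\<forall>x y z. m (x + y) z = m x z + m y z) \<and>
     (\<forall>x y z. m x (y + z) = m x y + m x z) \<and>
     (\<forall>c x y. m (c *\<^sub>C x) y = c *\<^sub>C m x y) \<and>
     (\<forall>c x y. m x (c *\<^sub>C y) = c *\<^sub>C m x y)"

definition clinear_map :: "('a::complex_vector \<Rightarrow> 'a) \<Rightarrow> bool" where
  "clinear_map T \<longleftrightarrow> (\<forall>a b. T (a + b) = T a + T b) \<and> (\<forall>c a. T (c *\<^sub>C a) = c *\<^sub>C T a)"

definition in_L :: "('a::complex_algebra \<Rightarrow> 'a) \<Rightarrow> bool" where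
  "in_L T \<longleftrightarrow> clinear_map T \<and> (\<forall>a b. T (a * b) = T a * b)"

text \<open>T \<in> M(A): aT \<in> A for all a.\<close>
definition in_M :: "('a::complex_algebra \<Rightarrow> 'a) \<Rightarrow> bool" where
  "in_M T \<longleftrightarrow> in_L T \<and> (\<forall>a. \<exists>c. \<forall>b. c * b = a * T b)"

text \<open>The element aT of A (for T \<in> M(A)).\<close>
definition rm :: "('a::complex_algebra \<Rightarrow> 'a) \<Rightarrow> 'a \<Rightarrow> 'a" where
  "rm T a = (THE c. \<forall>b. c * b = a * T b)"

definition cond_i :: "'a::complex_algebra itself \<Rightarrow> bool" where
  "cond_i _ \<longleftrightarrow>
     (\<forall>a::'a. (\<forall>b. a * b = 0) \<longrightarrow> a = 0) \<and>
     (\<forall>a::'a. \<exists>ps. a = sum_list (map (\<lambda>(x, y). x * y) ps))"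

definition cond_ii :: "('b::complex_vector \<Rightarrow> 'b \<Rightarrow> 'b) \<Rightarrow> ('b \<Rightarrow> 'a::complex_algebra \<Rightarrow> 'a) \<Rightarrow>
    ('b \<Rightarrow> 'a \<Rightarrow> 'a) \<Rightarrow> bool" where
  "cond_ii mB s t \<longleftrightarrow>
     (\<forall>x. in_M (s x)) \<and> (\<forall>x. in_M (t x)) \<and>
     (\<forall>x y. s (mB x y) = s x \<circ> s y) \<and>
     (\<forall>x y. s (x + y) = (\<lambda>a. s x a + s y a)) \<and>
     (\<forall>c x. s (c *\<^sub>C x) = (\<lambda>a. c *\<^sub>C s x a)) \<and>
     (\<forall>x y. t (mB x y) = t y \<circ> t x) \<and>
     (\<forall>x y. t (x + y) = (\<lambda>a. t x a + t y a)) \<and>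
     (\<forall>c x. t (c *\<^sub>C x) = (\<lambda>a. c *\<^sub>C t x a)) \<and>
     (\<forall>x y. s x \<circ> t y = t y \<circ> s x) \<and>
     inj s \<and> inj t \<and>
     (\<forall>a. \<exists>ps. a = sum_list (map (\<lambda>(x, b). s x b) ps)) \<and>
     (\<forall>a. \<exists>ps. a = sum_list (map (\<lambda>(x, b). t x b) ps)) \<and>
     (\<forall>X. (\<forall>a. eqQ s t (rmul1 X a) []) \<longrightarrow> eqQ s t X []) \<and>
     (\<forall>X. (\<forall>b. eqQ s t (rmul2 X b) []) \<longrightarrow> eqQ s t X [])"

text \<open>T \<in> A \<bar>\<times>_B A, T given on representatives (a linear endomorphism of
  _B A \<otimes> A^B).\<close>
definition in_barx :: "('b \<Rightarrow> 'a::complex_algebra \<Rightarrow> 'a) \<Rightarrow> ('b \<Rightarrow> 'a \<Rightarrow> 'a) \<Rightarrow>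
    (('a \<times> 'a) list \<Rightarrow> ('a \<times> 'a) list) \<Rightarrow> bool" where
  "in_barx s t T \<longleftrightarrow>
     (\<forall>l l'. eqQ s t l l' \<longrightarrow> eqQ s t (T l) (T l')) \<and>
     (\<forall>l l'. eqQ s t (T (l @ l')) (T l @ T l')) \<and>
     (\<forall>c l. eqQ s t (T (scal c l)) (scal c (T l))) \<and>
     (\<forall>a. \<exists>X. \<forall>b. eqQ s t (T [(a, b)]) (rmul2 X b)) \<and>
     (\<forall>b. \<exists>Y. \<forall>a. eqQ s t (T [(a, b)]) (rmul1 Y a))"

definition cond_iii :: "('b \<Rightarrow> 'a::complex_algebra \<Rightarrow> 'a) \<Rightarrow> ('b \<Rightarrow> 'a \<Rightarrow> 'a) \<Rightarrow>
    ('a \<Rightarrow> ('a \<times> 'a) list \<Rightarrow> ('a \<times> 'a) list) \<Rightarrow> bool" where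
  "cond_iii s t \<Delta> \<longleftrightarrow>
     (\<forall>a. in_barx s t (\<Delta> a)) \<and>
     (\<forall>a b l. eqQ s t (\<Delta> (a + b) l) (\<Delta> a l @ \<Delta> b l)) \<and>
     (\<forall>c a l. eqQ s t (\<Delta> (c *\<^sub>C a) l) (scal c (\<Delta> a l))) \<and>
     (\<forall>a b l. eqQ s t (\<Delta> (a * b) l) (\<Delta> a (\<Delta> b l)))"

definition cond_iv :: "('b \<Rightarrow> 'a::complex_algebra \<Rightarrow> 'a) \<Rightarrow> ('b \<Rightarrow> 'a \<Rightarrow> 'a) \<Rightarrow>
    ('a \<Rightarrow> ('a \<times> 'a) list \<Rightarrow> ('a \<times> 'a) list) \<Rightarrow> bool" where
  "cond_iv s t \<Delta> \<longleftrightarrow>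
     (\<forall>a x y x' y' l.
        eqQ s t (\<Delta> (s x (t y (rm (t y') (rm (s x') a)))) l)
                (lmul2 (t y) (s x) (\<Delta> a (lmul2 (t y') (s x') l))))"

text \<open>Representatives of \<Delta>(b)(a \<otimes> 1) and of \<Delta>(a)(1 \<otimes> b), i.e. of the associated
  maps  T\<lambda>~(a \<otimes> b) = \<Delta>(b)(a \<otimes> 1)  and  T\<rho>~(a \<otimes> b) = \<Delta>(a)(1 \<otimes> b).\<close>
definition Tlam :: "('b \<Rightarrow> 'a::complex_algebra \<Rightarrow> 'a) \<Rightarrow> ('b \<Rightarrow> 'a \<Rightarrow> 'a) \<Rightarrow>
    ('a \<Rightarrow> ('a \<times> 'a) list \<Rightarrow> ('a \<times> 'a) list) \<Rightarrow> 'a \<Rightarrow> 'a \<Rightarrow> ('a \<times> 'a) list set" where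
  "Tlam s t \<Delta> a b = {X. \<forall>c. eqQ s t (\<Delta> b [(a, c)]) (rmul2 X c)}"

definition Trho :: "('b \<Rightarrow> 'a::complex_algebra \<Rightarrow> 'a) \<Rightarrow> ('b \<Rightarrow> 'a \<Rightarrow> 'a) \<Rightarrow>
    ('a \<Rightarrow> ('a \<times> 'a) list \<Rightarrow> ('a \<times> 'a) list) \<Rightarrow> 'a \<Rightarrow> 'a \<Rightarrow> ('a \<times> 'a) list set" where
  "Trho s t \<Delta> a b = {Y. \<forall>c. eqQ s t (\<Delta> a [(c, b)]) (rmul1 Y c)}"

definition cond_v :: "('b \<Rightarrow> 'a::complex_algebra \<Rightarrow> 'a) \<Rightarrow> ('b \<Rightarrow> 'a \<Rightarrow> 'a) \<Rightarrow>
    ('a \<Rightarrow> ('a \<times> 'a) list \<Rightarrow> ('a \<times> 'a) list) \<Rightarrow> bool" where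
  "cond_v s t \<Delta> \<longleftrightarrow>
     (\<forall>a b c ps us R S.
        ps \<in> Trho s t \<Delta> b c \<and> us \<in> Tlam s t \<Delta> a b \<and>
        (\<forall>i < length ps. R i \<in> Tlam s t \<Delta> a (fst (ps ! i))) \<and>
        (\<forall>j < length us. S j \<in> Trho s t \<Delta> (snd (us ! j)) c) \<longrightarrow>
        eq3 s t
          (concat (map (\<lambda>i. map (\<lambda>(x, y). (x, y, snd (ps ! i))) (R i)) [0..<length ps]))
          (concat (map (\<lambda>j. map (\<lambda>(x, y). (fst (us ! j), x, y)) (S j)) [0..<length us])))"

definition left_mult_bialgebroid ::
    "('b::complex_vector \<Rightarrow> 'b \<Rightarrow> 'b) \<Rightarrow> ('b \<Rightarrow> 'a::complex_algebra \<Rightarrow> 'a) \<Rightarrow> ('b \<Rightarrow> 'a \<Rightarrow> 'a) \<Rightarrow>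
     ('a \<Rightarrow> ('a \<times> 'a) list \<Rightarrow> ('a \<times> 'a) list) \<Rightarrow> bool" where
  "left_mult_bialgebroid mB s t \<Delta> \<longleftrightarrow>
     cplx_alg mB \<and> cond_i TYPE('a) \<and> cond_ii mB s t \<and>
     cond_iii s t \<Delta> \<and> cond_iv s t \<Delta> \<and> cond_v s t \<Delta>"

definition flipQ :: "('a \<times> 'a) list \<Rightarrow> ('a \<times> 'a) list" where
  "flipQ = map prod.swap"

definition varsigma :: "(('a \<times> 'a) list \<Rightarrow> ('a \<times> 'a) list) \<Rightarrow> ('a \<times> 'a) list \<Rightarrow> ('a \<times> 'a) list" where
  "varsigma T = flipQ \<circ> T \<circ> flipQ"

definition Delta_co :: "('a \<Rightarrow> ('a \<times> 'a) list \<Rightarrow> ('a \<times> 'a) list) \<Rightarrow> 'a \<Rightarrow> ('a \<times> 'a) list \<Rightarrow> ('a \<times> 'a) list" where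
  "Delta_co \<Delta> = varsigma \<circ> \<Delta>"

end

theory Submission
  imports Defs
begin

lemma cspan_lin: "g \<in> cspan G \<Longrightarrow> f \<in> cspan G \<Longrightarrow> (\<lambda>q. c * g q + f q) \<in> cspan G"
proof (induction g rule: cspan.induct)
  case cspan_zero then show ?case by simp
next
  case (cspan_step g0 f0 d)
  have "(\<lambda>q. c * f0 q + f q) \<in> cspan G" using cspan_step by blast
  from cspan.cspan_step[OF cspan_step(1) this, of "c*d"]
  show ?case by (simp add: algebra_simps)
qed

lemma cspan_gen: "g \<in> G \<Longrightarrow> g \<in> cspan G"
  using cspan.cspan_step[of g G "\<lambda>_. 0" 1] by (simp add: cspan.cspan_zero)

lemma cspan_add: "g \<in> cspan G \<Longrightarrow> f \<in> cspan G \<Longrightarrow> (\<lambda>q. g q + f q) \<in> cspan G"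
  using cspan_lin[of g G f 1] by simp

lemma cspan_neg: "g \<in> cspan G \<Longrightarrow> (\<lambda>q. - g q) \<in> cspan G"
  using cspan_lin[of g G "\<lambda>_. 0" "-1"] by (simp add: cspan.cspan_zero)

lemma cspan_map:
  assumes "\<And>g. g \<in> G \<Longrightarrow> (\<lambda>q. g (f q)) \<in> cspan H"
  shows "h \<in> cspan G \<Longrightarrow> (\<lambda>q. h (f q)) \<in> cspan H"
proof (induction h rule: cspan.induct)
  case cspan_zero then show ?case by (simp add: cspan.cspan_zero)
next
  case (cspan_step g f0 c)
  then show ?case using cspan_lin[OF assms[OF cspan_step(1)] cspan_step(3)] by simp
qed

lemma fv_Nil: "fv [] = (\<lambda>q. 0)" by (simp add: fv_def)
lemma fv_Cons: "fv (x # l) = (\<lambda>q. delta x q + fv l q)"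
  by (auto simp: fv_def delta_def)
lemma fv_append: "fv (l @ l') = (\<lambda>q. fv l q + fv l' q)"
  by (simp add: fv_def)

lemma count_map_inv: assumes "\<And>x. f (f x) = x" shows "count_list (map f l) q = count_list l (f q)"
proof -
  have iff: "f a = q \<longleftrightarrow> a = f q" for a using assms by metis
  show ?thesis by (induction l) (simp_all add: iff)
qed

lemma fv_map_inv: "(\<And>x. f (f x) = x) \<Longrightarrow> fv (map f l) q = fv l (f q)"
  by (simp add: fv_def count_map_inv)

lemma delta_inv: "(\<And>x. f (f x) = x) \<Longrightarrow> delta p (f q) = delta (f p) q"
  unfolding delta_def by metis

lemma eqQ_refl: "eqQ s t l l"
  by (simp add: eqQ_def cspan.cspan_zero)

lemma eqQ_sym: "eqQ s t l l' \<Longrightarrow> eqQ s t l' l"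
  unfolding eqQ_def by (drule cspan_neg) simp

lemma eqQ_trans: "eqQ s t l l' \<Longrightarrow> eqQ s t l' l'' \<Longrightarrow> eqQ s t l l''"
  unfolding eqQ_def by (drule (1) cspan_add) simp

lemma eqQ_append: "eqQ s t l1 l1' \<Longrightarrow> eqQ s t l2 l2' \<Longrightarrow> eqQ s t (l1 @ l2) (l1' @ l2')"
  unfolding eqQ_def fv_append by (drule (1) cspan_add) (simp add: algebra_simps)

lemma swap_inv: "prod.swap (prod.swap x) = x" by simp

lemma tens2_I1: "(\<lambda>q. delta (a + a', b) q - delta (a, b) q - delta (a', b) q) \<in> tens2"
  unfolding tens2_def by (rule UnI1, rule UnI1, rule UnI1) auto
lemma tens2_I2: "(\<lambda>q. delta (a, b + b') q - delta (a, b) q - delta (a, b') q) \<in> tens2"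
  unfolding tens2_def by (rule UnI1, rule UnI1, rule UnI2) auto
lemma tens2_I3: "(\<lambda>q. delta (c *\<^sub>C a, b) q - c * delta (a, b) q) \<in> tens2"
  unfolding tens2_def by (rule UnI1, rule UnI2) auto
lemma tens2_I4: "(\<lambda>q. delta (a, c *\<^sub>C b) q - c * delta (a, b) q) \<in> tens2"
  unfolding tens2_def by (rule UnI2) auto
lemma bal2_I: "(\<lambda>q. delta (s x a, b) q - delta (a, t x b) q) \<in> bal2 s t"
  unfolding bal2_def by auto

lemma eqQ_flip: "eqQ s t l l' \<Longrightarrow> eqQ t s (flipQ l) (flipQ l')"
proof -
  assume h: "eqQ s t l l'"
  have "\<And>g. g \<in> tens2 \<union> bal2 s t \<Longrightarrow> (\<lambda>q. g (prod.swap q)) \<in> cspan (tens2 \<union> bal2 t s)"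
  proof -
    fix g
    assume "g \<in> tens2 \<union> bal2 s t"
    then consider (t1) a a' b where "g = (\<lambda>q. delta (a + a', b) q - delta (a, b) q - delta (a', b) q)"
      | (t2) a b b' where "g = (\<lambda>q. delta (a, b + b') q - delta (a, b) q - delta (a, b') q)"
      | (t3) c a b where "g = (\<lambda>q. delta (c *\<^sub>C a, b) q - c * delta (a, b) q)"
      | (t4) c a b where "g = (\<lambda>q. delta (a, c *\<^sub>C b) q - c * delta (a, b) q)"
      | (b1) x a b where "g = (\<lambda>q. delta (s x a, b) q - delta (a, t x b) q)"
      unfolding tens2_def bal2_def by blast
    then show "(\<lambda>q. g (prod.swap q)) \<in> cspan (tens2 \<union> bal2 t s)"
    proof cases
      case t1 then show ?thesis
        using cspan_gen[OF UnI1[OF tens2_I2[of b a a']]] by (simp add: delta_inv[OF swap_inv])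
    next
      case t2 then show ?thesis
        using cspan_gen[OF UnI1[OF tens2_I1[of b b' a]]] by (simp add: delta_inv[OF swap_inv])
    next
      case t3 then show ?thesis
        using cspan_gen[OF UnI1[OF tens2_I4[of b c a]]] by (simp add: delta_inv[OF swap_inv])
    next
      case t4 then show ?thesis
        using cspan_gen[OF UnI1[OF tens2_I3[of c b a]]] by (simp add: delta_inv[OF swap_inv])
    next
      case b1
      from cspan_neg[OF cspan_gen[OF UnI2[OF bal2_I[of t x b a s]]]] b1 show ?thesis
        by (simp add: delta_inv[OF swap_inv])
    qed
  qed
  from cspan_map[OF this h[unfolded eqQ_def]] show ?thesis
    unfolding eqQ_def flipQ_def fv_map_inv[OF swap_inv] by simp
qed

lemma flipQ_flipQ[simp]: "flipQ (flipQ l) = l"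
  by (simp add: flipQ_def comp_def)

lemma eqQ_flip_iff: "eqQ t s (flipQ l) (flipQ l') = eqQ s t l l'"
  using eqQ_flip[of t s "flipQ l" "flipQ l'"] eqQ_flip[of s t l l'] by auto

lemma eqQ_flip_iff2: "eqQ t s l l' = eqQ s t (flipQ l) (flipQ l')"
  using eqQ_flip_iff[of t s "flipQ l" "flipQ l'"] by simp

lemma flipQ_append[simp]: "flipQ (l @ l') = flipQ l @ flipQ l'" by (simp add: flipQ_def)
lemma flipQ_Nil[simp]: "flipQ [] = []" by (simp add: flipQ_def)
lemma flipQ_single[simp]: "flipQ [(a, b)] = [(b, a)]" by (simp add: flipQ_def)
lemma flipQ_rmul1: "flipQ (rmul1 Y a) = rmul2 (flipQ Y) a"
  by (simp add: flipQ_def rmul1_def rmul2_def split_def)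
lemma flipQ_rmul2: "flipQ (rmul2 Y a) = rmul1 (flipQ Y) a"
  by (simp add: flipQ_def rmul1_def rmul2_def split_def)
lemma flipQ_lmul2: "flipQ (lmul2 f g l) = lmul2 g f (flipQ l)"
  by (simp add: flipQ_def lmul2_def split_def)

lemma eqQ_scal2: "eqQ s t (flipQ (scal c (flipQ Y))) (scal c Y)"
proof (induction Y)
  case Nil then show ?case by (simp add: scal_def eqQ_refl)
next
  case (Cons y Y)
  obtain a b where y: "y = (a, b)" by (cases y)
  have g1: "(\<lambda>q. delta (a, c *\<^sub>C b) q - c * delta (a, b) q) \<in> cspan (tens2 \<union> bal2 s t)"
    by (rule cspan_gen, rule UnI1, rule tens2_I4)
  have g2: "(\<lambda>q. delta (c *\<^sub>C a, b) q - c * delta (a, b) q) \<in> cspan (tens2 \<union> bal2 s t)"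
    by (rule cspan_gen, rule UnI1, rule tens2_I3)
  have "(\<lambda>q. fv (flipQ (scal c (flipQ Y))) q - fv (scal c Y) q) \<in> cspan (tens2 \<union> bal2 s t)"
    using Cons by (simp add: eqQ_def)
  from cspan_add[OF g1 cspan_add[OF cspan_neg[OF g2] this]]
  show ?case
    by (simp add: eqQ_def y scal_def flipQ_def fv_Cons algebra_simps)
qed


lemma flipQ_image: "x \<in> flipQ ` S \<longleftrightarrow> flipQ x \<in> S"
  by (metis flipQ_flipQ image_iff)

lemma Delta_co_app: "Delta_co \<Delta> a l = flipQ (\<Delta> a (flipQ l))"
  by (simp add: Delta_co_def varsigma_def)

lemma Tlam_co: "Tlam t s (Delta_co \<Delta>) a b = flipQ ` Trho s t \<Delta> b a"
  by (auto simp: flipQ_image Tlam_def Trho_def Delta_co_app eqQ_flip_iff2[of t s] flipQ_rmul2)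

lemma Trho_co: "Trho t s (Delta_co \<Delta>) a b = flipQ ` Tlam s t \<Delta> b a"
  by (auto simp: flipQ_image Tlam_def Trho_def Delta_co_app eqQ_flip_iff2[of t s] flipQ_rmul1)

lemma rm_unique:
  fixes c d :: "'a::complex_algebra"
  assumes nd: "\<forall>a::'a::complex_algebra. (\<forall>b. a * b = 0) \<longrightarrow> a = 0"
    and h: "\<forall>b. c * b = d * b"
  shows "c = d"
proof -
  have "\<forall>b. (c - d) * b = 0" using h by (simp add: left_diff_distrib)
  with nd have "c - d = 0" by blast
  then show ?thesis by simp
qed

lemma rm_eq:
  fixes T :: "'a::complex_algebra \<Rightarrow> 'a"
  assumes nd: "\<forall>a::'a::complex_algebra. (\<forall>b. a * b = 0) \<longrightarrow> a = 0"
    and M: "in_M T"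
  shows "rm T a * b = a * T b"
proof -
  from M obtain c where c: "\<forall>b. c * b = a * T b" unfolding in_M_def by blast
  have "rm T a = c" unfolding rm_def
  proof (rule the_equality)
    show "\<forall>b. c * b = a * T b" by (rule c)
    fix c' assume "\<forall>b. c' * b = a * T b"
    with c have "\<forall>b. c' * b = c * b" by simp
    then show "c' = c" by (rule rm_unique[OF nd])
  qed
  with c show ?thesis by simp
qed

lemma rm_comm:
  fixes S T :: "'a::complex_algebra \<Rightarrow> 'a"
  assumes nd: "\<forall>a::'a::complex_algebra. (\<forall>b. a * b = 0) \<longrightarrow> a = 0"
    and S: "in_M S" and T: "in_M T" and c: "S \<circ> T = T \<circ> S"
  shows "rm S (rm T a) = rm T (rm S a)"
proof -
  have "rm S (rm T a) * b = rm T (rm S a) * b" for b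
  proof -
  have "rm S (rm T a) * b = rm T a * S b" by (rule rm_eq[OF nd S])
  also have "\<dots> = a * T (S b)" by (rule rm_eq[OF nd T])
  also have "T (S b) = S (T b)" using fun_cong[OF c, of b] by (simp only: comp_apply)
  also have "a * S (T b) = rm S a * T b" by (rule rm_eq[OF nd S, symmetric])
  also have "\<dots> = rm T (rm S a) * b" by (rule rm_eq[OF nd T, symmetric])
  finally show ?thesis .
  qed
  then have "\<forall>b. rm S (rm T a) * b = rm T (rm S a) * b" by blast
  then show ?thesis by (rule rm_unique[OF nd])
qed

lemma in_barx_co:
  assumes T: "in_barx s t T"
  shows "in_barx t s (flipQ \<circ> T \<circ> flipQ)"
proof -
  from T have T1: "\<And>l l'. eqQ s t l l' \<Longrightarrow> eqQ s t (T l) (T l')"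
    and T2: "\<And>l l'. eqQ s t (T (l @ l')) (T l @ T l')"
    and T3: "\<And>c l. eqQ s t (T (scal c l)) (scal c (T l))"
    and T4: "\<And>a. \<exists>X. \<forall>b. eqQ s t (T [(a, b)]) (rmul2 X b)"
    and T5: "\<And>b. \<exists>Y. \<forall>a. eqQ s t (T [(a, b)]) (rmul1 Y a)"
    unfolding in_barx_def by blast+
  have "eqQ t s (flipQ (T (flipQ (scal c l)))) (scal c (flipQ (T (flipQ l))))" for c l
  proof -
    have "eqQ s t (flipQ (scal c l)) (scal c (flipQ l))"
      using eqQ_scal2[of s t c "flipQ l"] by simp
    then have "eqQ s t (T (flipQ (scal c l))) (scal c (T (flipQ l)))"
      using T1 T3 eqQ_trans by blast
    then have "eqQ t s (flipQ (T (flipQ (scal c l)))) (flipQ (scal c (T (flipQ l))))"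
      by (rule eqQ_flip)
    moreover have "eqQ t s (flipQ (scal c (T (flipQ l)))) (scal c (flipQ (T (flipQ l))))"
      using eqQ_scal2[of t s c "flipQ (T (flipQ l))"] by simp
    ultimately show ?thesis by (rule eqQ_trans)
  qed
  moreover have "\<exists>X. \<forall>b. eqQ t s (flipQ (T [(b, a)])) (rmul2 X b)" for a
  proof -
    obtain Y where "\<forall>b. eqQ s t (T [(b, a)]) (rmul1 Y b)" using T5 by blast
    then show ?thesis by (intro exI[of _ "flipQ Y"]) (simp add: eqQ_flip_iff2[of t s] flipQ_rmul2)
  qed
  moreover have "\<exists>Y. \<forall>a. eqQ t s (flipQ (T [(b, a)])) (rmul1 Y a)" for b
  proof -
    obtain X where "\<forall>a. eqQ s t (T [(b, a)]) (rmul2 X a)" using T4 by blast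
    then show ?thesis by (intro exI[of _ "flipQ X"]) (simp add: eqQ_flip_iff2[of t s] flipQ_rmul1)
  qed
  ultimately show ?thesis unfolding in_barx_def
    using T1 T2 by (simp add: eqQ_flip_iff2[of t s])
qed


definition rev3 :: "'a \<times> 'a \<times> 'a \<Rightarrow> 'a \<times> 'a \<times> 'a" where
  "rev3 = (\<lambda>(p, q, r). (r, q, p))"

lemma rev3_inv: "rev3 (rev3 x) = x" by (cases x) (simp add: rev3_def)
lemma rev3_alt: "rev3 x = (snd (snd x), fst (snd x), fst x)" by (simp add: rev3_def split_def)
lemma rev3_simp[simp]: "rev3 (a, b, c) = (c, b, a)" by (simp add: rev3_def)

lemma tens3_I1: "(\<lambda>q. delta (a + a', b, d) q - delta (a, b, d) q - delta (a', b, d) q) \<in> tens3"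
  unfolding tens3_def by (rule UnI1, rule UnI1, rule UnI1, rule UnI1, rule UnI1) auto
lemma tens3_I2: "(\<lambda>q. delta (a, b + b', d) q - delta (a, b, d) q - delta (a, b', d) q) \<in> tens3"
  unfolding tens3_def by (rule UnI1, rule UnI1, rule UnI1, rule UnI1, rule UnI2) auto
lemma tens3_I3: "(\<lambda>q. delta (a, b, d + d') q - delta (a, b, d) q - delta (a, b, d') q) \<in> tens3"
  unfolding tens3_def by (rule UnI1, rule UnI1, rule UnI1, rule UnI2) auto
lemma tens3_I4: "(\<lambda>q. delta (c *\<^sub>C a, b, d) q - c * delta (a, b, d) q) \<in> tens3"
  unfolding tens3_def by (rule UnI1, rule UnI1, rule UnI2) auto
lemma tens3_I5: "(\<lambda>q. delta (a, c *\<^sub>C b, d) q - c * delta (a, b, d) q) \<in> tens3"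
  unfolding tens3_def by (rule UnI1, rule UnI2) auto
lemma tens3_I6: "(\<lambda>q. delta (a, b, c *\<^sub>C d) q - c * delta (a, b, d) q) \<in> tens3"
  unfolding tens3_def by (rule UnI2) auto
lemma bal3_I1: "(\<lambda>q. delta (s x a, b, d) q - delta (a, t x b, d) q) \<in> bal3 s t"
  unfolding bal3_def by (rule UnI1) auto
lemma bal3_I2: "(\<lambda>q. delta (a, s x b, d) q - delta (a, b, t x d) q) \<in> bal3 s t"
  unfolding bal3_def by (rule UnI2) auto

lemma eq3_sym: "eq3 s t l l' \<Longrightarrow> eq3 s t l' l"
  unfolding eq3_def by (drule cspan_neg) simp

lemma eq3_rev: "eq3 s t l l' \<Longrightarrow> eq3 t s (map rev3 l) (map rev3 l')"
proof -
  assume h: "eq3 s t l l'"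
  have "\<And>g. g \<in> tens3 \<union> bal3 s t \<Longrightarrow> (\<lambda>q. g (rev3 q)) \<in> cspan (tens3 \<union> bal3 t s)"
  proof -
    fix g
    assume "g \<in> tens3 \<union> bal3 s t"
    then consider "g \<in> tens3" | "g \<in> bal3 s t" by blast
    then consider (t1) a a' b d where "g = (\<lambda>q. delta (a + a', b, d) q - delta (a, b, d) q - delta (a', b, d) q)"
      | (t2) a b b' d where "g = (\<lambda>q. delta (a, b + b', d) q - delta (a, b, d) q - delta (a, b', d) q)"
      | (t3) a b d d' where "g = (\<lambda>q. delta (a, b, d + d') q - delta (a, b, d) q - delta (a, b, d') q)"
      | (t4) c a b d where "g = (\<lambda>q. delta (c *\<^sub>C a, b, d) q - c * delta (a, b, d) q)"
      | (t5) c a b d where "g = (\<lambda>q. delta (a, c *\<^sub>C b, d) q - c * delta (a, b, d) q)"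
      | (t6) c a b d where "g = (\<lambda>q. delta (a, b, c *\<^sub>C d) q - c * delta (a, b, d) q)"
      | (b1) x a b d where "g = (\<lambda>q. delta (s x a, b, d) q - delta (a, t x b, d) q)"
      | (b2) x a b d where "g = (\<lambda>q. delta (a, s x b, d) q - delta (a, b, t x d) q)"
    proof cases
      case 1
      from 1 show ?thesis unfolding tens3_def
        apply (elim UnE CollectE exE conjE)
        apply (erule that)+
        done
    next
      case 2
      from 2 show ?thesis unfolding bal3_def
        apply (elim UnE CollectE exE conjE)
        apply (erule that)+
        done
    qed
    then show "(\<lambda>q. g (rev3 q)) \<in> cspan (tens3 \<union> bal3 t s)"
    proof cases
      case t1 then show ?thesis
        using cspan_gen[OF UnI1[OF tens3_I3[where a=d and b=b and d=a and d'=a']]]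
        by (simp add: delta_inv[OF rev3_inv])
    next
      case t2 then show ?thesis
        using cspan_gen[OF UnI1[OF tens3_I2[where a=d and b=b and b'=b' and d=a]]]
        by (simp add: delta_inv[OF rev3_inv])
    next
      case t3 then show ?thesis
        using cspan_gen[OF UnI1[OF tens3_I1[where a=d and a'=d' and b=b and d=a]]]
        by (simp add: delta_inv[OF rev3_inv])
    next
      case t4 then show ?thesis
        using cspan_gen[OF UnI1[OF tens3_I6[where a=d and b=b and c=c and d=a]]]
        by (simp add: delta_inv[OF rev3_inv])
    next
      case t5 then show ?thesis
        using cspan_gen[OF UnI1[OF tens3_I5[where a=d and b=b and c=c and d=a]]]
        by (simp add: delta_inv[OF rev3_inv])
    next
      case t6 then show ?thesis
        using cspan_gen[OF UnI1[OF tens3_I4[where a=d and b=b and c=c and d=a]]]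
        by (simp add: delta_inv[OF rev3_inv])
    next
      case b1
      from cspan_neg[OF cspan_gen[OF UnI2[OF bal3_I2[where s=t and t=s and a=d and b=b and d=a and x=x]]]] b1
      show ?thesis by (simp add: delta_inv[OF rev3_inv])
    next
      case b2
      from cspan_neg[OF cspan_gen[OF UnI2[OF bal3_I1[where s=t and t=s and a=d and b=b and d=a and x=x]]]] b2
      show ?thesis by (simp add: delta_inv[OF rev3_inv])
    qed
  qed
  from cspan_map[OF this h[unfolded eq3_def]] show ?thesis
    unfolding eq3_def fv_map_inv[OF rev3_inv] by simp
qed


lemma cplx_alg_op: "cplx_alg mB \<Longrightarrow> cplx_alg (\<lambda>x y. mB y x)"
  unfolding cplx_alg_def by metis

lemma cond_ii_co:
  assumes "cond_ii mB s t"
  shows "cond_ii (\<lambda>x y. mB y x) t s"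
proof -
  from assms have nd1: "\<forall>X. (\<forall>a. eqQ s t (rmul1 X a) []) \<longrightarrow> eqQ s t X []"
    and nd2: "\<forall>X. (\<forall>b. eqQ s t (rmul2 X b) []) \<longrightarrow> eqQ s t X []"
    unfolding cond_ii_def by blast+
  have "\<forall>X. (\<forall>a. eqQ t s (rmul1 X a) []) \<longrightarrow> eqQ t s X []"
  proof (intro allI impI)
    fix X assume "\<forall>a. eqQ t s (rmul1 X a) []"
    then have "\<forall>a. eqQ s t (rmul2 (flipQ X) a) []"
      by (simp add: eqQ_flip_iff2[of t s] flipQ_rmul1)
    with nd2 have "eqQ s t (flipQ X) []" by blast
    then show "eqQ t s X []" by (simp add: eqQ_flip_iff2[of t s])
  qed
  moreover have "\<forall>X. (\<forall>a. eqQ t s (rmul2 X a) []) \<longrightarrow> eqQ t s X []"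
  proof (intro allI impI)
    fix X assume "\<forall>a. eqQ t s (rmul2 X a) []"
    then have "\<forall>a. eqQ s t (rmul1 (flipQ X) a) []"
      by (simp add: eqQ_flip_iff2[of t s] flipQ_rmul2)
    with nd1 have "eqQ s t (flipQ X) []" by blast
    then show "eqQ t s X []" by (simp add: eqQ_flip_iff2[of t s])
  qed
  ultimately show ?thesis using assms unfolding cond_ii_def by metis
qed

lemma varsigma_eq: "varsigma T = flipQ \<circ> T \<circ> flipQ" by (simp add: varsigma_def)

lemma cond_iii_co:
  assumes "cond_iii s t \<Delta>"
  shows "cond_iii t s (Delta_co \<Delta>)"
proof -
  from assms have B: "\<And>a. in_barx s t (\<Delta> a)"
    and H1: "\<And>a b l. eqQ s t (\<Delta> (a + b) l) (\<Delta> a l @ \<Delta> b l)"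
    and H2: "\<And>c a l. eqQ s t (\<Delta> (c *\<^sub>C a) l) (scal c (\<Delta> a l))"
    and H3: "\<And>a b l. eqQ s t (\<Delta> (a * b) l) (\<Delta> a (\<Delta> b l))"
    unfolding cond_iii_def by blast+
  have "in_barx t s (Delta_co \<Delta> a)" for a
    using in_barx_co[OF B[of a]] by (simp add: Delta_co_def varsigma_def)
  moreover have "eqQ t s (Delta_co \<Delta> (a + b) l) (Delta_co \<Delta> a l @ Delta_co \<Delta> b l)" for a b l
    using H1 by (simp add: Delta_co_app eqQ_flip_iff2[of t s])
  moreover have "eqQ t s (Delta_co \<Delta> (c *\<^sub>C a) l) (scal c (Delta_co \<Delta> a l))" for c a l
  proof -
    have "eqQ t s (flipQ (\<Delta> (c *\<^sub>C a) (flipQ l))) (flipQ (scal c (\<Delta> a (flipQ l))))"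
      using H2 by (simp add: eqQ_flip_iff2[of t s])
    moreover have "eqQ t s (flipQ (scal c (\<Delta> a (flipQ l)))) (scal c (flipQ (\<Delta> a (flipQ l))))"
      using eqQ_scal2[of t s c "flipQ (\<Delta> a (flipQ l))"] by simp
    ultimately show ?thesis by (simp add: Delta_co_app) (rule eqQ_trans)
  qed
  moreover have "eqQ t s (Delta_co \<Delta> (a * b) l) (Delta_co \<Delta> a (Delta_co \<Delta> b l))" for a b l
    using H3 by (simp add: Delta_co_app eqQ_flip_iff2[of t s])
  ultimately show ?thesis unfolding cond_iii_def by blast
qed

lemma cond_iv_co:
  fixes s t :: "'b::complex_vector \<Rightarrow> 'a::complex_algebra \<Rightarrow> 'a"
  assumes nd: "\<forall>a::'a::complex_algebra. (\<forall>b. a * b = 0) \<longrightarrow> a = 0"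
    and ii: "cond_ii mB s t" and iv: "cond_iv s t \<Delta>"
  shows "cond_iv t s (Delta_co \<Delta>)"
  unfolding cond_iv_def
proof (intro allI)
  fix a x y x' y' l
  from ii have Ms: "\<And>x. in_M (s x)" and Mt: "\<And>x. in_M (t x)"
    and cm: "\<And>x y. s x \<circ> t y = t y \<circ> s x"
    unfolding cond_ii_def by (elim conjE; blast)+
  have e1: "t x (s y z) = s y (t x z)" for z using fun_cong[OF cm[of y x], of z] by simp
  have e2: "rm (s y') (rm (t x') a) = rm (t x') (rm (s y') a)"
    by (rule rm_comm[OF nd Ms[of y'] Mt[of x'] cm[of y' x']])
  from iv have "eqQ s t (\<Delta> (s y (t x (rm (t x') (rm (s y') a)))) (flipQ l))
                (lmul2 (t x) (s y) (\<Delta> a (lmul2 (t x') (s y') (flipQ l))))"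
    using iv[unfolded cond_iv_def, rule_format, where a=a and x=y and y=x and x'=y' and y'=x' and l="flipQ l"] by simp
  then have "eqQ t s (flipQ (\<Delta> (s y (t x (rm (t x') (rm (s y') a)))) (flipQ l)))
                (flipQ (lmul2 (t x) (s y) (\<Delta> a (lmul2 (t x') (s y') (flipQ l)))))"
    by (rule eqQ_flip)
  then show "eqQ t s (Delta_co \<Delta> (t x (s y (rm (s y') (rm (t x') a)))) l)
          (lmul2 (s y) (t x) (Delta_co \<Delta> a (lmul2 (s y') (t x') l)))"
    by (simp add: Delta_co_app e1 e2 flipQ_lmul2)
qed


lemma length_flipQ[simp]: "length (flipQ l) = length l" by (simp add: flipQ_def)
lemma nth_flipQ: "i < length l \<Longrightarrow> flipQ l ! i = prod.swap (l ! i)" by (simp add: flipQ_def)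

lemma cond_v_co:
  assumes v: "cond_v s t \<Delta>"
  shows "cond_v t s (Delta_co \<Delta>)"
  unfolding cond_v_def
proof (intro allI impI)
  fix a b c ps us R S
  assume h: "ps \<in> Trho t s (Delta_co \<Delta>) b c \<and> us \<in> Tlam t s (Delta_co \<Delta>) a b \<and>
        (\<forall>i<length ps. R i \<in> Tlam t s (Delta_co \<Delta>) a (fst (ps ! i))) \<and>
        (\<forall>j<length us. S j \<in> Trho t s (Delta_co \<Delta>) (snd (us ! j)) c)"
  define ps' where "ps' = flipQ ps"
  define us' where "us' = flipQ us"
  define R' where "R' = (\<lambda>i. flipQ (R i))"
  define S' where "S' = (\<lambda>j. flipQ (S j))"
  have 1: "us' \<in> Trho s t \<Delta> b a" using h by (simp add: Tlam_co flipQ_image us'_def)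
  have 2: "ps' \<in> Tlam s t \<Delta> c b" using h by (simp add: Trho_co flipQ_image ps'_def)
  have 3: "\<forall>j<length us'. S' j \<in> Tlam s t \<Delta> c (fst (us' ! j))"
    using h by (simp add: Trho_co flipQ_image us'_def S'_def nth_flipQ)
  have 4: "\<forall>i<length ps'. R' i \<in> Trho s t \<Delta> (snd (ps' ! i)) a"
    using h by (simp add: Tlam_co flipQ_image ps'_def R'_def nth_flipQ)
  have E: "eq3 s t (concat (map (\<lambda>i. map (\<lambda>(x, y). (x, y, snd (us' ! i))) (S' i)) [0..<length us']))
          (concat (map (\<lambda>j. map (\<lambda>(x, y). (fst (ps' ! j), x, y)) (R' j)) [0..<length ps']))"
    using v[unfolded cond_v_def, rule_format, of us' b a ps' c S' R'] 1 2 3 4 by blast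
  have e1: "map rev3 (concat (map (\<lambda>i. map (\<lambda>(x, y). (x, y, snd (us' ! i))) (S' i)) [0..<length us']))
      = concat (map (\<lambda>j. map (\<lambda>(x, y). (fst (us ! j), x, y)) (S j)) [0..<length us])"
  proof -
    have "map (\<lambda>i. map rev3 (map (\<lambda>(x, y). (x, y, snd (us' ! i))) (S' i))) [0..<length us]
      = map (\<lambda>j. map (\<lambda>(x, y). (fst (us ! j), x, y)) (S j)) [0..<length us]"
      by (rule map_cong) (auto simp: us'_def S'_def nth_flipQ flipQ_def split_def rev3_alt)
    moreover have "length us' = length us" by (simp add: us'_def)
    ultimately show ?thesis by (simp only: map_concat map_map comp_def)
  qed
  have e2: "map rev3 (concat (map (\<lambda>j. map (\<lambda>(x, y). (fst (ps' ! j), x, y)) (R' j)) [0..<length ps']))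
      = concat (map (\<lambda>i. map (\<lambda>(x, y). (x, y, snd (ps ! i))) (R i)) [0..<length ps])"
  proof -
    have "map (\<lambda>j. map rev3 (map (\<lambda>(x, y). (fst (ps' ! j), x, y)) (R' j))) [0..<length ps]
      = map (\<lambda>i. map (\<lambda>(x, y). (x, y, snd (ps ! i))) (R i)) [0..<length ps]"
      by (rule map_cong) (auto simp: ps'_def R'_def nth_flipQ flipQ_def split_def rev3_alt)
    moreover have "length ps' = length ps" by (simp add: ps'_def)
    ultimately show ?thesis by (simp only: map_concat map_map comp_def)
  qed
  from eq3_sym[OF eq3_rev[OF E]]
  show "eq3 t s (concat (map (\<lambda>i. map (\<lambda>(x, y). (x, y, snd (ps ! i))) (R i)) [0..<length ps]))
          (concat (map (\<lambda>j. map (\<lambda>(x, y). (fst (us ! j), x, y)) (S j)) [0..<length us]))"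
    by (simp only: e1 e2)
qed

theorem proposition2p7:
  fixes mB :: "'b::complex_vector \<Rightarrow> 'b \<Rightarrow> 'b"
    and s t :: "'b \<Rightarrow> 'a::complex_algebra \<Rightarrow> 'a"
    and \<Delta> :: "'a \<Rightarrow> ('a \<times> 'a) list \<Rightarrow> ('a \<times> 'a) list"
  assumes "left_mult_bialgebroid mB s t \<Delta>"
  shows "left_mult_bialgebroid (\<lambda>x y. mB y x) t s (Delta_co \<Delta>)
    \<and> (\<forall>a b. Tlam t s (Delta_co \<Delta>) a b = flipQ ` Trho s t \<Delta> b a)
    \<and> (\<forall>a b. Trho t s (Delta_co \<Delta>) a b = flipQ ` Tlam s t \<Delta> b a)"
proof -
  have m: "cplx_alg mB" using assms unfolding left_mult_bialgebroid_def by (elim conjE)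
  have i: "cond_i TYPE('a)" using assms unfolding left_mult_bialgebroid_def by (elim conjE)
  have ii: "cond_ii mB s t" using assms unfolding left_mult_bialgebroid_def by (elim conjE)
  have iii: "cond_iii s t \<Delta>" using assms unfolding left_mult_bialgebroid_def by (elim conjE)
  have iv: "cond_iv s t \<Delta>" using assms unfolding left_mult_bialgebroid_def by (elim conjE)
  have v: "cond_v s t \<Delta>" using assms unfolding left_mult_bialgebroid_def by (elim conjE)
  have nd: "\<forall>a::'a. (\<forall>b. a * b = 0) \<longrightarrow> a = 0" using i unfolding cond_i_def by (elim conjE)
  have L: "left_mult_bialgebroid (\<lambda>x y. mB y x) t s (Delta_co \<Delta>)"
    unfolding left_mult_bialgebroid_def
    by (intro conjI cplx_alg_op[OF m] i cond_ii_co[OF ii] cond_iii_co[OF iii] cond_iv_co[OF nd ii iv]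
      cond_v_co[OF v])
  show ?thesis
    by (intro conjI L allI Tlam_co Trho_co)
qed

end
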